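(* Let $k\ge4$ be an integer and $\eta\in[\eta_{k+1},\eta_k)$. Then $\angle z_{k-1}z_kw_1,\ \angle z_kw_1w_2,\ \angle w_{k-1}w_kb_0,\ \angle w_kb_0z_0\in(0,\pi)$.
   Context: For $\eta\in(0,\pi/3)$ let $a=\frac{e^{-i\eta}}{2\cos\eta}$, $c=\frac{1}{1-|a|^4}$, and for integers $j\ge0$ put $z_j=ca^{j+1}$, $w_j=1-c|a|^2a^j$, $b_0=a+c|a|^4$. For $u,v,w\in\mathbb{C}$, $\angle uvw=\arg\frac{w-v}{u-v}$ with $\arg$ taking values in $[0,2\pi)$. For integers $k\ge1$ let $\Phi_k(\eta)=(1-|a|^4)\sin((k-1)\eta)-|a|^3\sin((k-2)\eta)+|a|^k\sin\eta$; for each $k\ge4$, $\Phi_k$ has a unique zero in $(\pi/k,\pi/(k-1))$, denoted $\eta_k$. *)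

theory Defs
  imports "HOL-Analysis.Analysis"
begin

definition aa :: "real \<Rightarrow> complex" where
  "aa \<eta> = cis (- \<eta>) / complex_of_real (2 * cos \<eta>)"

definition cc :: "real \<Rightarrow> real" where
  "cc \<eta> = 1 / (1 - cmod (aa \<eta>) ^ 4)"

definition zz :: "real \<Rightarrow> nat \<Rightarrow> complex" where
  "zz \<eta> j = complex_of_real (cc \<eta>) * aa \<eta> ^ (j + 1)"

definition ww :: "real \<Rightarrow> nat \<Rightarrow> complex" where
  "ww \<eta> j = 1 - complex_of_real (cc \<eta> * cmod (aa \<eta>) ^ 2) * aa \<eta> ^ j"

definition bb0 :: "real \<Rightarrow> complex" where
  "bb0 \<eta> = aa \<eta> + complex_of_real (cc \<eta> * cmod (aa \<eta>) ^ 4)"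

definition arg02pi :: "complex \<Rightarrow> real" where
  "arg02pi z = (if Arg z < 0 then Arg z + 2 * pi else Arg z)"

definition angle3 :: "complex \<Rightarrow> complex \<Rightarrow> complex \<Rightarrow> real" where
  "angle3 u v w = arg02pi ((w - v) / (u - v))"

definition Phi :: "nat \<Rightarrow> real \<Rightarrow> real" where
  "Phi k \<eta> = (1 - cmod (aa \<eta>) ^ 4) * sin ((real k - 1) * \<eta>)
     - cmod (aa \<eta>) ^ 3 * sin ((real k - 2) * \<eta>) + cmod (aa \<eta>) ^ k * sin \<eta>"

definition eta :: "nat \<Rightarrow> real" where
  "eta k = (THE x. pi / real k < x \<and> x < pi / (real k - 1) \<and> Phi k x = 0)"

end

theory Submission
  imports Defs
begin


definition RR :: "real \<Rightarrow> real" where "RR x = 1 / (2 * cos x)"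

lemma aa_cis: "aa x = complex_of_real (RR x) * cis (- x)"
  by (simp add: aa_def RR_def)

lemma cmod_aa: "cos x > 0 \<Longrightarrow> cmod (aa x) = RR x"
  by (simp add: aa_def norm_divide RR_def)

lemma one_minus_aa: "cos x > 0 \<Longrightarrow> 1 - aa x = cnj (aa x)"
  by (rule complex_eqI) (auto simp: aa_cis RR_def field_simps)

lemma aa_pow: "aa x ^ j = complex_of_real (RR x ^ j) * cis (- (real j * x))"
proof -
  have "cis (- x) ^ j = cis (real j * (- x))" by (rule Complex.DeMoivre)
  then show ?thesis by (simp add: aa_cis power_mult_distrib)
qed

lemma cnj_aa_pow: "cnj (aa x) ^ j = complex_of_real (RR x ^ j) * cis (real j * x)"
proof -
  have "cis x ^ j = cis (real j * x)" by (rule Complex.DeMoivre)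
  then show ?thesis by (simp add: aa_cis power_mult_distrib cis_cnj)
qed

lemma Im_ratio:
  assumes "u - v = complex_of_real s * p" "s > 0" "p \<noteq> 0"
  shows "Im ((w - v) / (u - v)) > 0 \<longleftrightarrow> Im ((w - v) * cnj p) > 0"
proof -
  have e: "p * cnj p = complex_of_real ((cmod p)^2)" by (rule complex_norm_square[symmetric])
  have "cnj p \<noteq> 0" using assms by simp
  then have "(w - v) / (u - v) = ((w - v) * cnj p) / (complex_of_real s * (p * cnj p))"
    using assms by (simp add: field_simps)
  also have "\<dots> = ((w - v) * cnj p) / complex_of_real (s * (cmod p)^2)" by (simp add: e)
  finally have "(w - v) / (u - v) = ((w - v) * cnj p) / complex_of_real (s * (cmod p)^2)" .
  moreover have "s * (cmod p)^2 > 0" using assms by simp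
  ultimately show ?thesis by (simp add: Im_divide_of_real zero_less_divide_iff)
qed

lemma arg02pi_in: "Im z > 0 \<Longrightarrow> arg02pi z \<in> {0<..<pi}"
  using Arg_lt_pi[of z] by (auto simp: arg02pi_def)

lemma aa_cnj_aa: "aa x * cnj (aa x) = complex_of_real ((RR x)^2)"
  by (simp add: aa_cis cis_cnj cis_mult power2_eq_square)

lemma Im_ofr_cis: "Im (complex_of_real y * cis t) = y * sin t"
  by simp

lemma alg1: "(d::real) \<noteq> 0 \<Longrightarrow> r \<noteq> 0 \<Longrightarrow> d*(q*r^3*A - 1/d*r^2*(q*r^4*B) + 1/d*(q*q*r^8*(2*S*(1/(2*r))))) = q*r^3*(d*A - r^3*B + q*r^4*S)"
  by (simp add: field_simps) (simp add: algebra_simps eval_nat_numeral)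

lemma key_im1:
  assumes cpos: "cos x > 0" and r1: "RR x < 1"
  shows "(1 - RR x ^ 4) * Im ((ww x 1 - zz x (n + 4)) * cnj (aa x ^ (n + 3)))
         = RR x ^ (n + 3) * Phi (n + 4) x"
proof -
  define r where "r = RR x"
  define a where "a = aa x"
  have ca: "cmod a = r" using cmod_aa[OF cpos] by (simp add: a_def r_def)
  have r0: "r > 0" using cpos by (simp add: r_def RR_def)
  have d: "1 - r^4 > 0" using r0 r1 unfolding r_def[symmetric]
    by (simp add: power_less_one_iff)
  have cc: "cc x = 1 / (1 - r^4)" using ca by (simp add: cc_def a_def)
  have I1: "Im (cnj a ^ (n+3)) = r^(n+3) * sin (real (n+3) * x)"
    by (simp only: a_def r_def cnj_aa_pow Im_ofr_cis)
  have I2: "Im (a * cnj a ^ (n+3)) = r^(n+4) * sin (real (n+2) * x)"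
  proof -
    have "a * cnj a ^ (n+3) = complex_of_real (r * r^(n+3)) * cis (- x + real (n+3) * x)"
      unfolding a_def r_def cnj_aa_pow by (simp add: aa_cis cis_mult)
    moreover have "- x + real (n+3) * x = real (n+2) * x" by (simp add: algebra_simps)
    moreover have "r * r^(n+3) = r^(n+4)" by (simp add: eval_nat_numeral)
    ultimately show ?thesis by (simp only: Im_ofr_cis)
  qed
  have I3: "Im (a ^ (n+5) * cnj a ^ (n+3)) = - (r^(2*n+8) * sin (2 * x))"
  proof -
    have "a ^ (n+5) * cnj a ^ (n+3) = complex_of_real (r^(n+5) * r^(n+3)) * cis (- (real (n+5) * x) + real (n+3) * x)"
      by (simp add: a_def r_def aa_pow cnj_aa_pow cis_mult)
    moreover have "- (real (n+5) * x) + real (n+3) * x = - (2 * x)" by (simp add: algebra_simps)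
    moreover have "r^(n+5) * r^(n+3) = r^(2*n+8)" by (simp add: power_add[symmetric])
    ultimately show ?thesis by simp
  qed
  have X: "(ww x 1 - zz x (n + 4)) * cnj (aa x ^ (n + 3))
     = cnj a ^ (n+3) - complex_of_real (cc x * r^2) * (a * cnj a ^ (n+3))
       - complex_of_real (cc x) * (a ^ (n+5) * cnj a ^ (n+3))"
    by (simp add: ww_def zz_def a_def r_def ca[unfolded a_def r_def] algebra_simps)
  have L: "Im ((ww x 1 - zz x (n + 4)) * cnj (aa x ^ (n + 3)))
     = r^(n+3) * sin (real (n+3) * x) - cc x * r^2 * (r^(n+4) * sin (real (n+2) * x))
       + cc x * (r^(2*n+8) * sin (2 * x))"
    unfolding X using I1 I2 I3 by simp
  have cx: "cos x = 1 / (2 * r)" using cpos by (simp add: r_def RR_def)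
  have P: "Phi (n + 4) x = (1 - r^4) * sin (real (n+3) * x) - r^3 * sin (real (n+2) * x) + r^(n+4) * sin x"
    unfolding Phi_def ca[unfolded a_def r_def] r_def
    by (simp add: algebra_simps)
  have pw: "r^(n+3) = r^n * r^3" "r^(n+4) = r^n * r^4" "r^(2*n+8) = r^n * r^n * r^8"
    by (simp_all add: power_add power_mult_distrib mult_2 eval_nat_numeral)
  have "(1 - r^4) * Im ((ww x 1 - zz x (n + 4)) * cnj (aa x ^ (n + 3)))
     = (1 - r^4) * (r^n * r^3 * sin (real (n+3) * x) - 1 / (1 - r^4) * r^2 * (r^n * r^4 * sin (real (n+2) * x))
       + 1 / (1 - r^4) * (r^n * r^n * r^8 * (2 * sin x * (1 / (2 * r)))))"
    unfolding L cc sin_double cx pw by simp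
  also have "\<dots> = r^n * r^3 * ((1 - r^4) * sin (real (n+3) * x) - r^3 * sin (real (n+2) * x) + r^n * r^4 * sin x)"
    by (rule alg1) (use d r0 in auto)
  finally show ?thesis unfolding P r_def[symmetric] pw .
qed

lemma basics:
  assumes cpos: "cos x > 0" and r1: "RR x < 1"
  shows "RR x > 0" "1 - RR x ^ 4 > 0" "cc x = 1 / (1 - RR x ^ 4)" "cc x > 0"
        "cmod (aa x) = RR x" "aa x \<noteq> 0"
proof -
  show r0: "RR x > 0" using cpos by (simp add: RR_def)
  show d: "1 - RR x ^ 4 > 0" using r0 r1 by (simp add: power_less_one_iff)
  show ca: "cmod (aa x) = RR x" using cmod_aa[OF cpos] .
  show cc: "cc x = 1 / (1 - RR x ^ 4)" using ca by (simp add: cc_def)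
  show "cc x > 0" using d cc by simp
  show "aa x \<noteq> 0" using ca r0 by auto
qed

lemma key_eq3:
  assumes cpos: "cos x > 0" and r1: "RR x < 1"
  shows "(bb0 x - ww x (n+4)) * cnj (- (aa x ^ (n+2))) = (ww x 1 - zz x (n+4)) * cnj (aa x ^ (n+3))"
proof -
  define a where "a = aa x"
  define b where "b = cnj a"
  define r where "r = RR x"
  note B = basics[OF cpos r1, folded r_def a_def]
  have ab: "a * b = complex_of_real (r^2)" unfolding a_def b_def r_def by (rule aa_cnj_aa)
  have ba: "1 - a = b" unfolding a_def b_def by (rule one_minus_aa[OF cpos])
  have c4: "complex_of_real (cc x * r^4) = complex_of_real (cc x * r^2) * complex_of_real (r^2)"
    by (simp add: eval_nat_numeral)
  have p1: "a ^ (n+4) * b ^ (n+2) = a^2 * (a*b)^(n+2)"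
    by (simp add: power_mult_distrib power_add eval_nat_numeral algebra_simps)
  have p2: "a ^ (n+5) * b ^ (n+3) = a^2 * (a*b)^(n+3)"
    by (simp add: power_mult_distrib power_add eval_nat_numeral algebra_simps)
  have p3: "a * b ^ (n+3) = (a * b) * b^(n+2)"
    by (simp add: eval_nat_numeral algebra_simps)
  have bbd: "bb0 x = a + complex_of_real (cc x * r^4)" by (simp add: bb0_def a_def r_def cmod_aa[OF cpos])
  have wwd: "\<And>j. ww x j = 1 - complex_of_real (cc x * r^2) * a^j" by (simp add: ww_def a_def r_def cmod_aa[OF cpos])
  have zzd: "\<And>j. zz x j = complex_of_real (cc x) * a^(j+1)" by (simp add: zz_def a_def)
  have L: "(bb0 x - ww x (n+4)) * cnj (- (aa x ^ (n+2)))
     = b * b^(n+2) - complex_of_real (cc x * r^2) * complex_of_real (r^2) * b^(n+2)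
       - complex_of_real (cc x * r^2) * (a ^ (n+4) * b ^ (n+2))"
  proof -
    have "(bb0 x - ww x (n+4)) * cnj (- (aa x ^ (n+2))) = - (a + complex_of_real (cc x * r^4) - 1 + complex_of_real (cc x * r^2) * a^(n+4)) * b^(n+2)"
      unfolding bbd wwd b_def a_def[symmetric] by (simp add: algebra_simps)
    also have "\<dots> = ((1 - a) - complex_of_real (cc x * r^4) - complex_of_real (cc x * r^2) * a^(n+4)) * b^(n+2)"
      by (simp add: algebra_simps)
    finally show ?thesis unfolding ba c4 by (simp add: algebra_simps)
  qed
  have R: "(ww x 1 - zz x (n+4)) * cnj (aa x ^ (n+3))
     = b * b^(n+2) - complex_of_real (cc x * r^2) * (a * b^(n+3))
       - complex_of_real (cc x) * (a ^ (n+5) * b ^ (n+3))"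
    unfolding wwd zzd b_def a_def[symmetric] by (simp add: algebra_simps eval_nat_numeral)
  show ?thesis unfolding L R p1 p2 p3 ab
    by (simp add: algebra_simps power_add eval_nat_numeral)
qed

lemma Im_ratio2:
  assumes "s > 0"
  shows "Im (complex_of_real s * p / Y) > 0 \<longleftrightarrow> Im (p * cnj Y) > 0"
proof (cases "Y = 0")
  case True then show ?thesis by simp
next
  case False
  have ey: "Y * cnj Y = complex_of_real ((cmod Y)^2)" by (rule complex_norm_square[symmetric])
  have "cnj Y \<noteq> 0" using False by simp
  then have "complex_of_real s * p / Y = complex_of_real s * (p * cnj Y) / (Y * cnj Y)"
    by (simp add: field_simps)
  also have "\<dots> = (p * cnj Y) * complex_of_real s / complex_of_real ((cmod Y)^2)"
    unfolding ey by (simp add: mult.commute)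
  finally have e: "Im (complex_of_real s * p / Y) = Im (p * cnj Y) * s / (cmod Y)^2"
    by (simp add: Im_divide_of_real)
  have "(cmod Y)^2 > 0" using False by simp
  then show ?thesis unfolding e using assms by (simp add: zero_less_divide_iff zero_less_mult_iff)
qed

lemma angles:
  assumes cpos: "cos x > 0" and r1: "RR x < 1"
  shows "Phi (n+4) x > 0 \<Longrightarrow> angle3 (zz x (n+3)) (zz x (n+4)) (ww x 1) \<in> {0<..<pi}"
    and "Phi (n+4) x > 0 \<Longrightarrow> angle3 (ww x (n+3)) (ww x (n+4)) (bb0 x) \<in> {0<..<pi}"
    and "sin x + RR x ^ (n+2) * sin (real (n+5) * x) > 0 \<Longrightarrow> angle3 (zz x (n+4)) (ww x 1) (ww x 2) \<in> {0<..<pi}"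
    and "sin x + RR x ^ (n+2) * sin (real (n+5) * x) > 0 \<Longrightarrow> angle3 (ww x (n+4)) (bb0 x) (zz x 0) \<in> {0<..<pi}"
proof -
  define a where "a = aa x"
  define b where "b = cnj a"
  define r where "r = RR x"
  define c where "c = cc x"
  note B = basics[OF cpos r1, folded r_def a_def c_def]
  have ab: "a * b = complex_of_real (r^2)" unfolding a_def b_def r_def by (rule aa_cnj_aa)
  have ba: "1 - a = b" unfolding a_def b_def by (rule one_minus_aa[OF cpos])
  have bbd: "bb0 x = a + complex_of_real (c * r^4)" by (simp add: bb0_def a_def r_def c_def cmod_aa[OF cpos])
  have wwd: "\<And>j. ww x j = 1 - complex_of_real (c * r^2) * a^j" by (simp add: ww_def a_def r_def c_def cmod_aa[OF cpos])
  have zzd: "\<And>j. zz x j = complex_of_real c * a^(j+1)" by (simp add: zz_def a_def c_def)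
  have Imb: "\<And>j. Im (b ^ j) = r^j * sin (real j * x)"
    unfolding b_def a_def r_def cnj_aa_pow by simp
  have Ima: "\<And>j. Im (a ^ j) = - (r^j * sin (real j * x))"
    unfolding a_def r_def aa_pow by simp
  have Ima1: "Im a = - (r * sin x)" using Ima[of 1] by simp
  have Imb1: "Im b = r * sin x" using Imb[of 1] by simp
  have an: "\<And>j. a ^ j \<noteq> 0" using B by simp
  { assume P: "Phi (n+4) x > 0"
    have K: "Im ((ww x 1 - zz x (n + 4)) * cnj (a ^ (n + 3))) > 0"
    proof -
      have "(1 - r^4) * Im ((ww x 1 - zz x (n + 4)) * cnj (a ^ (n + 3))) > 0"
        unfolding a_def r_def key_im1[OF cpos r1] using P B(1) by (simp add: r_def)
      then show ?thesis using B(2) by (simp add: zero_less_mult_iff)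
    qed
    have d1: "zz x (n+3) - zz x (n+4) = complex_of_real (c * r^2) * a^(n+3)"
    proof -
      have "zz x (n+3) - zz x (n+4) = complex_of_real c * a^(n+3) * (a * (1 - a))"
        unfolding zzd by (simp add: algebra_simps eval_nat_numeral)
      then show ?thesis unfolding ba ab by (simp add: algebra_simps)
    qed
    have "Im ((ww x 1 - zz x (n+4)) / (zz x (n+3) - zz x (n+4))) > 0"
      using Im_ratio[OF d1 _ an] B K by (simp add: zero_less_mult_iff)
    then show "angle3 (zz x (n+3)) (zz x (n+4)) (ww x 1) \<in> {0<..<pi}"
      unfolding angle3_def by (rule arg02pi_in)
    have d3: "ww x (n+3) - ww x (n+4) = complex_of_real (c * r^4) * (- (a^(n+2)))"
    proof -
      have "ww x (n+3) - ww x (n+4) = - (complex_of_real (c * r^2) * a^(n+2) * (a * (1 - a)))"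
        unfolding wwd by (simp add: algebra_simps eval_nat_numeral)
      then show ?thesis unfolding ba ab by (simp add: algebra_simps eval_nat_numeral)
    qed
    have e: "(bb0 x - ww x (n+4)) * cnj (- (a^(n+2))) = (ww x 1 - zz x (n+4)) * cnj (a^(n+3))"
      using key_eq3[OF cpos r1, of n] unfolding a_def .
    have K3: "Im ((bb0 x - ww x (n+4)) * cnj (- (a^(n+2)))) > 0" unfolding e by (rule K)
    have pos: "c * r^4 > 0" using B by simp
    have nz: "- (a^(n+2)) \<noteq> 0" using an[of "n+2"] by simp
    have "Im ((bb0 x - ww x (n+4)) / (ww x (n+3) - ww x (n+4))) > 0"
      using Im_ratio[OF d3 pos nz, of "bb0 x"] K3 by blast
    then show "angle3 (ww x (n+3)) (ww x (n+4)) (bb0 x) \<in> {0<..<pi}"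
      unfolding angle3_def by (rule arg02pi_in)
  }
  { assume Q: "sin x + RR x ^ (n+2) * sin (real (n+5) * x) > 0"
    have IQ: "Im (ww x 1 - zz x (n+4)) = c * r^3 * (sin x + r ^ (n+2) * sin (real (n+5) * x))"
    proof -
      have "ww x 1 - zz x (n+4) = 1 - complex_of_real (c * r^2) * a - complex_of_real c * a^(n+5)"
        unfolding wwd zzd by (simp add: add.commute)
      then have "Im (ww x 1 - zz x (n+4)) = - (c * r^2) * Im a - c * Im (a^(n+5))" by simp
      also have "\<dots> = c * r^2 * (r * sin x) + c * (r^(n+5) * sin (real (n+5) * x))"
        unfolding Ima1 Ima[of "n+5"] by simp
      also have "\<dots> = c * r^3 * (sin x + r ^ (n+2) * sin (real (n+5) * x))"
        by (simp add: algebra_simps power_add eval_nat_numeral)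
      finally show ?thesis .
    qed
    have IQp: "Im (ww x 1 - zz x (n+4)) > 0" unfolding IQ using Q B by (simp add: r_def)
    have e2: "ww x 2 - ww x 1 = complex_of_real (c * r^4) * 1"
    proof -
      have "ww x 2 - ww x 1 = complex_of_real (c * r^2) * (a * (1 - a))"
        unfolding wwd by (simp add: algebra_simps eval_nat_numeral)
      then show ?thesis unfolding ba ab by (simp add: algebra_simps eval_nat_numeral)
    qed
    have pos: "c * r^4 > 0" using B by simp
    have "Im (1 * cnj (zz x (n+4) - ww x 1)) > 0" using IQp by simp
    then have "Im ((ww x 2 - ww x 1) / (zz x (n+4) - ww x 1)) > 0"
      unfolding e2 using Im_ratio2[OF pos, of 1 "zz x (n+4) - ww x 1"] by blast
    then show "angle3 (zz x (n+4)) (ww x 1) (ww x 2) \<in> {0<..<pi}"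
      unfolding angle3_def by (rule arg02pi_in)
    have e4: "zz x 0 - bb0 x = complex_of_real (c * r^4) * (- b)"
    proof -
      have c1: "c - 1 = c * r^4" using B by (simp add: field_simps)
      have "zz x 0 - bb0 x = complex_of_real (c - 1) * a - complex_of_real (c * r^4)"
        unfolding zzd bbd by (simp add: algebra_simps)
      also have "\<dots> = complex_of_real (c * r^4) * (- (1 - a))" unfolding c1 by (simp add: algebra_simps)
      finally show ?thesis unfolding ba .
    qed
    have IY: "Im (- b * cnj (ww x (n+4) - bb0 x)) = c * r^5 * (sin x + r ^ (n+2) * sin (real (n+5) * x))"
    proof -
      have "- b * cnj (ww x (n+4) - bb0 x) = - b * (1 - b) + complex_of_real (c * r^4) * b + complex_of_real (c * r^2) * b^(n+5)"
        unfolding wwd bbd b_def by (simp add: algebra_simps eval_nat_numeral)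
      also have "\<dots> = - (a * b) + complex_of_real (c * r^4) * b + complex_of_real (c * r^2) * b^(n+5)"
      proof -
        have "1 - b = a" using ba by (simp add: algebra_simps)
        then show ?thesis by simp
      qed
      also have "\<dots> = - complex_of_real (r^2) + complex_of_real (c * r^4) * b + complex_of_real (c * r^2) * b^(n+5)"
        unfolding ab ..
      finally have eZ: "- b * cnj (ww x (n+4) - bb0 x) = - complex_of_real (r^2) + complex_of_real (c * r^4) * b + complex_of_real (c * r^2) * b^(n+5)" .
      have "Im (- complex_of_real (r^2) + complex_of_real (c * r^4) * b + complex_of_real (c * r^2) * b^(n+5))
         = (c * r^4) * Im b + (c * r^2) * Im (b^(n+5))" by simp
      also have "\<dots> = c * r^5 * (sin x + r ^ (n+2) * sin (real (n+5) * x))"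
        unfolding Imb1 Imb[of "n+5"] by (simp add: algebra_simps power_add eval_nat_numeral)
      finally show ?thesis unfolding eZ .
    qed
    have "Im ((zz x 0 - bb0 x) / (ww x (n+4) - bb0 x)) > 0"
      unfolding e4 Im_ratio2[OF pos] IY using B Q by (simp add: r_def)
    then show "angle3 (ww x (n+4)) (bb0 x) (zz x 0) \<in> {0<..<pi}"
      unfolding angle3_def by (rule arg02pi_in)
  }
qed



lemma cos_lb: assumes "(0::real) \<le> x" shows "1 - x^2/2 \<le> cos x"
proof -
  let ?f = "\<lambda>t::real. cos t - 1 + t^2/2"
  have "?f 0 \<le> ?f x"
  proof (rule DERIV_nonneg_imp_nondecreasing[OF assms])
    fix t assume t: "0 \<le> t" "t \<le> x"
    have "(?f has_real_derivative (- sin t + t)) (at t)"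
      by (auto intro!: derivative_eq_intros simp: field_simps)
    moreover have "- sin t + t \<ge> 0" using sin_x_le_x[OF t(1)] by simp
    ultimately show "\<exists>y. (?f has_real_derivative y) (at t) \<and> 0 \<le> y" by blast
  qed
  then show ?thesis by simp
qed

lemma sin_lb: assumes "(0::real) \<le> x" shows "x - x^3/6 \<le> sin x"
proof -
  let ?f = "\<lambda>t::real. sin t - t + t^3/6"
  have "?f 0 \<le> ?f x"
  proof (rule DERIV_nonneg_imp_nondecreasing[OF assms])
    fix t assume t: "0 \<le> t" "t \<le> x"
    have "(?f has_real_derivative (cos t - 1 + t^2/2)) (at t)"
      by (auto intro!: derivative_eq_intros simp: field_simps power2_eq_square)
    moreover have "cos t - 1 + t^2/2 \<ge> 0" using cos_lb[OF t(1)] by simp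
    ultimately show "\<exists>y. (?f has_real_derivative y) (at t) \<and> 0 \<le> y" by blast
  qed
  then show ?thesis by simp
qed

lemma cos_pi5: assumes "0 \<le> x" "x \<le> pi / 5" shows "cos x \<ge> 4/5"
proof -
  have "x \<le> (63/100)" using assms pi_approx by simp
  then have "x^2 \<le> (63/100)^2" using assms power_mono by blast
  then have "x^2 \<le> (3969/10000)" by (simp add: power2_eq_square)
  then show ?thesis using cos_lb[OF assms(1)] by simp
qed

definition gg :: "nat \<Rightarrow> real \<Rightarrow> real" where
  "gg m x = (1 - RR x ^ 4) * sin ((real m - 1) * x) - RR x ^ 3 * sin ((real m - 2) * x) + RR x ^ m * sin x"

lemma Phi_gg: "cos x > 0 \<Longrightarrow> Phi m x = gg m x"
  by (simp add: Phi_def gg_def cmod_aa)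

lemma RR_deriv: "cos x \<noteq> 0 \<Longrightarrow> (RR has_real_derivative (2 * RR x ^ 2 * sin x)) (at x)"
  unfolding RR_def[abs_def]
  by (auto intro!: derivative_eq_intros simp: field_simps power2_eq_square)

definition gd :: "nat \<Rightarrow> real \<Rightarrow> real" where
  "gd m x = - (4 * RR x ^ 3 * (2 * RR x ^ 2 * sin x)) * sin ((real m - 1) * x)
     + (1 - RR x ^ 4) * ((real m - 1) * cos ((real m - 1) * x))
     - 3 * RR x ^ 2 * (2 * RR x ^ 2 * sin x) * sin ((real m - 2) * x)
     - RR x ^ 3 * ((real m - 2) * cos ((real m - 2) * x))
     + real m * RR x ^ (m - 1) * (2 * RR x ^ 2 * sin x) * sin x + RR x ^ m * cos x"

lemma gg_deriv: "cos x \<noteq> 0 \<Longrightarrow> (gg m has_real_derivative gd m x) (at x)"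
  unfolding gg_def[abs_def] gd_def
  by (rule derivative_eq_intros RR_deriv refl | assumption | simp)+ (simp add: algebra_simps eval_nat_numeral)

lemma RR_small:
  assumes "0 < x" "x \<le> pi / 4"
  shows "RR x > 0" "RR x ^ 2 \<le> 1/2" "RR x < 1" "RR x ^ 3 < 1/2" "RR x ^ 4 \<le> 1/4" "cos x > 0"
    "sin x ^ 2 \<le> 1/2" "RR x \<le> (71/100)" "RR x ^ 3 \<le> (71/200)"
proof -
  have c: "cos x \<ge> cos (pi/4)" using assms by (intro cos_monotone_0_pi_le) auto
  then have c2: "cos x \<ge> sqrt 2 / 2" by (simp add: cos_45)
  have "sqrt 2 / 2 > 0" by simp
  then show cp: "cos x > 0" using c2 by linarith
  have "(sqrt 2 / 2)^2 \<le> cos x ^ 2" using c2 by (intro power_mono) auto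
  then have cc: "cos x ^ 2 \<ge> 1/2" by (simp add: power_divide)
  show r0: "RR x > 0" using cp by (simp add: RR_def)
  show r2: "RR x ^ 2 \<le> 1/2" using cc cp by (simp add: RR_def power_divide field_simps)
  show "sin x ^ 2 \<le> 1/2" using cc sin_cos_squared_add[of x] by linarith
  show r71: "RR x \<le> (71/100)"
  proof (rule ccontr)
    assume "\<not> RR x \<le> (71/100)"
    then have "(71/100)^2 < RR x ^ 2" by (intro power_strict_mono) auto
    then show False using r2 by (simp add: power2_eq_square)
  qed
  show r1: "RR x < 1" using r71 by simp
  have "RR x ^ 3 = RR x * RR x ^ 2" by (simp add: eval_nat_numeral)
  also have "\<dots> \<le> (71/100) * (1/2)" using r71 r2 r0 by (intro mult_mono) auto
  finally show "RR x ^ 3 \<le> (71/200)" by simp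
  then show "RR x ^ 3 < 1/2" by simp
  have "RR x ^ 4 = (RR x ^ 2)^2" by simp
  also have "\<dots> \<le> (1/2)^2" using r2 by (intro power_mono) auto
  finally show "RR x ^ 4 \<le> 1/4" by (simp add: power2_eq_square)
qed

lemma posP:
  assumes k: "k \<ge> 4" and x1: "pi / (real k + 1) \<le> x" and x2: "x \<le> pi / real k"
  shows "gg k x > 0"
proof -
  have kr: "real k \<ge> 4" using k by simp
  have "pi / (real k + 1) > 0" using kr by simp
  then have x0: "x > 0" using x1 by linarith
  have "pi / real k \<le> pi / 4" using kr by (intro divide_left_mono) auto
  then have x4: "x \<le> pi / 4" using x2 by linarith
  note B = RR_small[OF x0 x4]
  define R where "R = RR x"
  define t where "t = pi - (real k - 1) * x"
  have kx: "real k * x \<le> pi" using x2 kr by (simp add: field_simps)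
  have kx1: "(real k + 1) * x \<ge> pi" using x1 kr by (simp add: field_simps)
  have tx: "x \<le> t" unfolding t_def using kx by (simp add: algebra_simps)
  have t2: "t \<le> pi / 2"
  proof -
    have "(real k - 1) * x = (real k + 1) * x - 2 * x" by (simp add: algebra_simps)
    then show ?thesis unfolding t_def using kx1 x4 by linarith
  qed
  have s1: "sin ((real k - 1) * x) = sin t" unfolding t_def
    by (metis sin_pi_minus diff_diff_cancel)
  have s2: "sin ((real k - 2) * x) = sin t * cos x + cos t * sin x"
  proof -
    have "(real k - 2) * x = pi - (t + x)" unfolding t_def by (simp add: algebra_simps)
    then show ?thesis by (simp add: sin_add)
  qed
  have sx: "sin x > 0" using x0 x4 by (intro sin_gt_zero) auto
  have st: "sin x \<le> sin t" using tx t2 x0 by (intro sin_monotone_2pi_le) auto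
  have rc: "R ^ 3 * cos x = R^2 / 2" unfolding R_def RR_def using B(6)
    by (simp add: field_simps eval_nat_numeral)
  have ct: "cos t \<le> 1" by simp
  have "gg k x = (1 - R^4) * sin t - R^3 * (sin t * cos x + cos t * sin x) + R^k * sin x"
    unfolding gg_def s1 s2 R_def ..
  also have "\<dots> = (1 - R^4 - R^2/2) * sin t - R^3 * cos t * sin x + R^k * sin x"
    using rc by (simp add: algebra_simps)
  also have "\<dots> \<ge> (1 - R^4 - R^2/2) * sin x - R^3 * sin x"
  proof -
    have a: "(1 - R^4 - R^2/2) * sin t \<ge> (1 - R^4 - R^2/2) * sin x"
      using st B unfolding R_def by (intro mult_left_mono) auto
    have b: "R^3 * cos t * sin x \<le> R^3 * sin x"
      using ct sx B unfolding R_def by (simp add: mult_left_le)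
    have c: "R^k * sin x \<ge> 0" using sx B unfolding R_def by simp
    show ?thesis using a b c by linarith
  qed
  finally have "gg k x \<ge> (1 - R^4 - R^2/2 - R^3) * sin x" by (simp add: algebra_simps)
  moreover have "(1 - R^4 - R^2/2 - R^3) * sin x > 0" using B sx unfolding R_def by simp
  ultimately show ?thesis by linarith
qed

lemma lin6: "(t1::real) \<le> 0 \<Longrightarrow> t2 \<le> -(3/5)*(M-1) \<Longrightarrow> 0 \<le> t3 \<Longrightarrow> -t4 \<le> 71/200*(M-2)
  \<Longrightarrow> t5 \<le> M/8 \<Longrightarrow> t6 = q/2 \<Longrightarrow> q \<le> 1/4 \<Longrightarrow> 5 \<le> M \<Longrightarrow> t1 + t2 - t3 - t4 + t5 + t6 < 0"
  by argo

lemma gd_neg: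
  assumes m: "m \<ge> 5" and x1: "pi / real m \<le> x" and x2: "x \<le> pi / (real m - 1)"
  shows "gd m x < 0"
proof -
  have mr: "real m \<ge> 5" using m by simp
  have "pi / real m > 0" using mr by simp
  then have x0: "x > 0" using x1 by linarith
  have "pi / (real m - 1) \<le> pi / 4" using mr by (intro divide_left_mono) auto
  then have x4: "x \<le> pi / 4" using x2 by linarith
  note B = RR_small[OF x0 x4]
  define R where "R = RR x"
  have R0: "R > 0" "R \<le> 1" using B unfolding R_def by auto
  have mx: "real m * x \<ge> pi" using x1 mr by (simp add: field_simps)
  have mx1: "(real m - 1) * x \<le> pi" using x2 mr by (simp add: field_simps)
  have sx: "sin x \<ge> 0" using x0 x4 by (intro sin_ge_zero) auto
  have S1: "sin ((real m - 1) * x) \<ge> 0" using mx1 x0 mr by (intro sin_ge_zero) auto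
  have S2: "sin ((real m - 2) * x) \<ge> 0"
  proof (rule sin_ge_zero)
    show "0 \<le> (real m - 2) * x" using x0 mr by simp
    have "(real m - 2) * x \<le> (real m - 1) * x" using x0 by (intro mult_right_mono) auto
    then show "(real m - 2) * x \<le> pi" using mx1 by linarith
  qed
  have C1: "cos ((real m - 1) * x) \<le> - 4/5"
  proof -
    define t where "t = pi - (real m - 1) * x"
    have t0: "0 \<le> t" unfolding t_def using mx1 by simp
    have "(real m - 1) * (pi / real m) \<le> (real m - 1) * x" using x1 mr by (intro mult_left_mono) auto
    moreover have "pi - (real m - 1) * (pi / real m) = pi / real m" using mr by (simp add: field_simps)
    moreover have "pi / real m \<le> pi / 5" using mr by (intro divide_left_mono) auto
    ultimately have "t \<le> pi / 5" unfolding t_def by linarith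
    then have "cos t \<ge> 4/5" using cos_pi5 t0 by blast
    moreover have "cos ((real m - 1) * x) = - cos t" unfolding t_def by simp
    ultimately show ?thesis by simp
  qed
  have C2: "- cos ((real m - 2) * x) \<le> 1" by simp
  have Rm1: "R ^ (m - 1) \<le> 1/4"
  proof -
    have "R ^ (m - 1) \<le> R ^ 4" using R0 m by (intro power_decreasing) auto
    then show ?thesis using B(5) unfolding R_def by linarith
  qed
  have Rm: "R ^ m * cos x = R ^ (m - 1) / 2"
  proof -
    have mm: "m = Suc (m - 1)" using m by simp
    have "R ^ m = R ^ Suc (m - 1)" using mm by simp
    then have "R ^ m = R ^ (m - 1) * R" by (simp add: mult.commute)
    then show ?thesis unfolding R_def RR_def using B(6) by simp
  qed
  have T5: "real m * R ^ (m - 1) * (2 * R ^ 2 * sin x) * sin x \<le> real m / 8"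
  proof -
    have e: "real m * R ^ (m - 1) * (2 * R ^ 2 * sin x) * sin x = 2 * real m * (R ^ (m - 1) * R ^ 2) * sin x ^ 2"
      by (simp add: power2_eq_square algebra_simps)
    have "R ^ (m - 1) * R ^ 2 = R ^ (m - 1 + 2)" by (rule power_add[symmetric])
    also have "m - 1 + 2 = m + 1" using m by simp
    finally have "R ^ (m - 1) * R ^ 2 = R ^ (m + 1)" .
    also have "\<dots> \<le> R ^ 6" using R0 m by (intro power_decreasing) auto
    also have "\<dots> = (R^2)^3" by simp
    also have "\<dots> \<le> (1/2)^3" using B unfolding R_def by (intro power_mono) auto
    finally have a0: "R ^ (m - 1) * R ^ 2 \<le> (1/2)^3" .
    have a: "R ^ (m - 1) * R ^ 2 \<le> 1/8" using a0 by (simp add: power_divide)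
    have "2 * real m * (R ^ (m - 1) * R ^ 2) * sin x ^ 2 \<le> 2 * real m * (1/8) * (1/2)"
      using a B(7) R0 by (intro mult_mono) auto
    then show ?thesis unfolding e by simp
  qed
  have T1: "- (4 * R ^ 3 * (2 * R ^ 2 * sin x)) * sin ((real m - 1) * x) \<le> 0"
    using R0 sx S1 by simp
  have T3: "3 * R ^ 2 * (2 * R ^ 2 * sin x) * sin ((real m - 2) * x) \<ge> 0"
    using R0 sx S2 by simp
  have T2: "(1 - R ^ 4) * ((real m - 1) * cos ((real m - 1) * x)) \<le> - (3/5) * (real m - 1)"
  proof -
    have "(1 - R ^ 4) * cos ((real m - 1) * x) \<le> (1 - R^4) * (- 4/5)"
      using C1 B unfolding R_def by (intro mult_left_mono) auto
    also have "\<dots> \<le> - 3/5" using B unfolding R_def by simp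
    finally have "(1 - R ^ 4) * cos ((real m - 1) * x) \<le> - 3/5" .
    then have "(real m - 1) * ((1 - R ^ 4) * cos ((real m - 1) * x)) \<le> (real m - 1) * (- 3/5)"
      using mr by (intro mult_left_mono) auto
    then show ?thesis by (simp add: algebra_simps)
  qed
  have T4: "- (R ^ 3 * ((real m - 2) * cos ((real m - 2) * x))) \<le> (71/200) * (real m - 2)"
  proof -
    have "- (R ^ 3 * ((real m - 2) * cos ((real m - 2) * x))) = (R^3 * (real m - 2)) * (- cos ((real m - 2) * x))"
      by simp
    also have "\<dots> \<le> (R^3 * (real m - 2)) * 1" using C2 R0 mr by (intro mult_left_mono) auto
    also have "\<dots> = R^3 * (real m - 2)" by simp
    also have "\<dots> \<le> (71/200) * (real m - 2)" using B(9) mr unfolding R_def by (intro mult_right_mono) auto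
    finally show ?thesis .
  qed
  have "gd m x = - (4 * R ^ 3 * (2 * R ^ 2 * sin x)) * sin ((real m - 1) * x)
     + (1 - R ^ 4) * ((real m - 1) * cos ((real m - 1) * x))
     - 3 * R ^ 2 * (2 * R ^ 2 * sin x) * sin ((real m - 2) * x)
     - R ^ 3 * ((real m - 2) * cos ((real m - 2) * x))
     + real m * R ^ (m - 1) * (2 * R ^ 2 * sin x) * sin x + R ^ m * cos x"
    unfolding gd_def R_def ..
  also have "\<dots> < 0" by (rule lin6[OF T1 T2 T3 T4 T5 Rm Rm1 mr])
  finally show ?thesis .
qed

lemma gg_cont: assumes "\<And>x. x \<in> {a..b} \<Longrightarrow> cos x \<noteq> 0" shows "continuous_on {a..b} (gg m)"
  by (rule continuous_at_imp_continuous_on) (use assms gg_deriv DERIV_isCont in blast)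

lemma big_facts:
  assumes m: "m \<ge> 5"
  shows "pi / real m < pi / (real m - 1)" "pi / (real m - 1) \<le> pi / 4" "0 < pi / real m"
proof -
  have mr: "real m \<ge> 5" using m by simp
  show "pi / real m < pi / (real m - 1)" using mr by (intro divide_strict_left_mono) auto
  show "pi / (real m - 1) \<le> pi / 4" using mr by (intro divide_left_mono) auto
  show "0 < pi / real m" using mr by simp
qed

lemma gg_decr:
  assumes m: "m \<ge> 5" and a: "pi / real m \<le> a" and ab: "a < b" and b: "b \<le> pi / (real m - 1)"
  shows "gg m a > gg m b"
proof (rule DERIV_neg_imp_decreasing[OF ab])
  fix x assume x: "a \<le> x" "x \<le> b"
  note F = big_facts[OF m]
  have "x > 0" "x \<le> pi/4" using x a b F by linarith+
  then have "cos x \<noteq> 0" using RR_small by force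
  moreover have "gd m x < 0" using gd_neg[OF m] x a b by simp
  ultimately show "\<exists>y. (gg m has_real_derivative y) (at x) \<and> y < 0" using gg_deriv by blast
qed

lemma gg_end:
  assumes m: "m \<ge> 5"
  shows "gg m (pi / (real m - 1)) < 0"
proof -
  define x where "x = pi / (real m - 1)"
  note F = big_facts[OF m]
  have x0: "x > 0" "x \<le> pi/4" using F unfolding x_def by linarith+
  note B = RR_small[OF x0]
  have mr: "real m \<ge> 5" using m by simp
  have e1: "(real m - 1) * x = pi" unfolding x_def using mr by simp
  have e2: "(real m - 2) * x = pi - x" unfolding x_def using mr by (simp add: field_simps)
  have sx: "sin x > 0" using x0 by (intro sin_gt_zero) auto
  have "RR x ^ m < RR x ^ 3" using B m by (intro power_strict_decreasing) auto
  then have "RR x ^ m * sin x < RR x ^ 3 * sin x" using sx by simp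
  then show ?thesis unfolding gg_def e1 e2 x_def[symmetric] by simp
qed

lemma eta_big:
  assumes m: "m \<ge> 5"
  shows "pi / real m < eta m" "eta m < pi / (real m - 1)" "gg m (eta m) = 0"
    "\<And>x. pi / real m \<le> x \<Longrightarrow> x < eta m \<Longrightarrow> gg m x > 0"
proof -
  note F = big_facts[OF m]
  define P where "P = (\<lambda>x. pi / real m < x \<and> x < pi / (real m - 1) \<and> Phi m x = 0)"
  have cosI: "\<And>x. pi / real m \<le> x \<Longrightarrow> x \<le> pi / (real m - 1) \<Longrightarrow> cos x > 0"
  proof -
    fix x assume "pi / real m \<le> x" "x \<le> pi / (real m - 1)"
    then have "x > 0" "x \<le> pi/4" using F by linarith+
    then show "cos x > 0" using RR_small by blast
  qed
  have g0: "gg m (pi / real m) > 0"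
  proof (rule posP)
    show "4 \<le> m" using m by simp
    show "pi / real m \<le> pi / real m" by simp
    show "pi / (real m + 1) \<le> pi / real m" using m by (intro divide_left_mono) auto
  qed
  have g1: "gg m (pi / (real m - 1)) < 0" by (rule gg_end[OF m])
  have cont: "continuous_on {pi / real m .. pi / (real m - 1)} (gg m)"
    by (rule gg_cont) (use cosI in force)
  obtain x0 where x0: "pi / real m \<le> x0" "x0 \<le> pi / (real m - 1)" "gg m x0 = 0"
    using IVT2'[of "gg m" "pi / (real m - 1)" 0 "pi / real m", OF _ _ _ cont] g0 g1 F by force
  have x0': "pi / real m < x0" "x0 < pi / (real m - 1)"
    using x0 g0 g1 by (auto simp: order_le_less)
  have ex: "\<exists>!x. P x"
  proof (rule ex1I[of _ x0])
    show "P x0" unfolding P_def using x0 x0' cosI[of x0] Phi_gg by auto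
  next
    fix y assume "P y"
    then have y: "pi / real m < y" "y < pi / (real m - 1)" "gg m y = 0"
      unfolding P_def using cosI[of y] Phi_gg by auto
    show "y = x0"
    proof (rule ccontr)
      assume "y \<noteq> x0"
      then consider "y < x0" | "x0 < y" by linarith
      then show False
      proof cases
        case 1 then show False using gg_decr[OF m, of y x0] y x0 by simp
      next
        case 2 then show False using gg_decr[OF m, of x0 y] y x0 by simp
      qed
    qed
  qed
  have Pe: "P (eta m)" unfolding eta_def P_def[symmetric] using theI'[OF ex] .
  then show e1: "pi / real m < eta m" "eta m < pi / (real m - 1)" unfolding P_def by auto
  show e3: "gg m (eta m) = 0" using Pe cosI[of "eta m"] Phi_gg unfolding P_def by auto
  fix x assume x: "pi / real m \<le> x" "x < eta m"
  show "gg m x > 0" using gg_decr[OF m x(1) x(2)] e1 e3 by simp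
qed

lemma gg4_closed:
  assumes "cos x > 0"
  shows "gg 4 x = sin x * (4 * cos x ^ 2 - 1) * ((4 * cos x ^ 2)^2 - 2) / (4 * cos x ^ 2)^2"
proof -
  have s3: "sin (3 * x) = sin x * (4 * cos x ^ 2 - 1)"
  proof -
    have "sin (3 * x) = sin (2 * x + x)" by simp
    also have "\<dots> = sin x * (3 * cos x ^ 2 - sin x ^ 2)"
      unfolding sin_add sin_double cos_double by (simp add: algebra_simps power2_eq_square)
    also have "\<dots> = sin x * (4 * cos x ^ 2 - 1)"
    proof -
      have h: "sin x ^ 2 = 1 - cos x ^ 2" using sin_cos_squared_add[of x] by linarith
      show ?thesis unfolding h by (simp add: algebra_simps)
    qed
    finally show ?thesis .
  qed
  have e1: "(real 4 - 1) * x = 3 * x" "(real 4 - 2) * x = 2 * x" by simp_all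
  show ?thesis unfolding gg_def e1 s3 sin_double RR_def using assms
    by (simp add: field_simps) (simp add: algebra_simps power2_eq_square eval_nat_numeral)
qed

lemma eta4:
  shows "pi / 4 < eta 4" "eta 4 < pi / 3" "cos (eta 4) = sqrt (sqrt 2) / 2"
proof -
  define c0 where "c0 = sqrt (sqrt 2) / 2"
  have q1: "sqrt (sqrt 2) > 1" by simp
  have q2: "sqrt (sqrt 2) < sqrt 2" by (simp add: sqrt2_less_2)
  have c0a: "1/2 < c0" "c0 < sqrt 2 / 2" unfolding c0_def using q1 q2 by auto
  have c0sq: "4 * c0^2 = sqrt 2" unfolding c0_def by (simp add: power_divide)
  have cp: "\<And>x. 0 \<le> x \<Longrightarrow> x < pi/3 \<Longrightarrow> cos x > 1/2"
  proof -
    fix x :: real assume "0 \<le> x" "x < pi/3"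
    then have "cos (pi/3) < cos x" by (intro cos_monotone_0_pi) auto
    then show "cos x > 1/2" by (simp add: cos_60)
  qed
  have s2: "sqrt 2 / 2 \<le> 1"
  proof -
    show ?thesis using sqrt2_less_2 by simp
  qed
  define x0 where "x0 = arccos c0"
  have cx0: "cos x0 = c0" unfolding x0_def using c0a s2 by (intro cos_arccos) auto
  have x0r: "0 \<le> x0" "x0 \<le> pi" unfolding x0_def using arccos[of c0] c0a s2 by auto
  have x0a: "pi/4 < x0"
  proof -
    have "cos x0 < cos (pi/4)" using cx0 c0a by (simp add: cos_45)
    then show ?thesis using x0r by (subst (asm) cos_mono_less_eq) auto
  qed
  have x0b: "x0 < pi/3"
  proof -
    have "cos (pi/3) < cos x0" using cx0 c0a by (simp add: cos_60)
    then show ?thesis using x0r by (subst (asm) cos_mono_less_eq) auto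
  qed
  define P where "P = (\<lambda>x. pi / real 4 < x \<and> x < pi / (real 4 - 1) \<and> Phi 4 x = 0)"
  have Pchar: "\<And>y. P y \<longleftrightarrow> pi/4 < y \<and> y < pi/3 \<and> cos y = c0"
  proof -
    fix y
    show "P y \<longleftrightarrow> pi/4 < y \<and> y < pi/3 \<and> cos y = c0"
    proof (cases "pi/4 < y \<and> y < pi/3")
      case False then show ?thesis unfolding P_def by auto
    next
      case True
      have y0: "0 < y" using True pi_gt_zero by linarith
      have cy: "cos y > 1/2" using cp[of y] True y0 by simp
      have sy: "sin y > 0" using True y0 by (intro sin_gt_zero) auto
      have u1: "4 * cos y ^ 2 - 1 > 0"
      proof -
        have "(1/2)^2 < cos y ^ 2" using cy by (intro power_strict_mono) auto
        then show ?thesis by (simp add: power2_eq_square)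
      qed
      have ph: "Phi 4 y = sin y * (4 * cos y ^ 2 - 1) * ((4 * cos y ^ 2)^2 - 2) / (4 * cos y ^ 2)^2"
        using cy Phi_gg gg4_closed by simp
      have "Phi 4 y = 0 \<longleftrightarrow> (4 * cos y ^ 2)^2 = 2"
        unfolding ph using sy u1 cy by simp
      also have "\<dots> \<longleftrightarrow> 4 * cos y ^ 2 = sqrt 2"
        by (metis (mono_tags, lifting) abs_of_nonneg real_sqrt_abs real_sqrt_pow2 u1 order.strict_implies_order diff_gt_0_iff_gt less_trans zero_less_one zero_le_numeral)
      also have "\<dots> \<longleftrightarrow> cos y ^ 2 = c0 ^ 2" using c0sq by auto
      also have "\<dots> \<longleftrightarrow> cos y = c0" using cy c0a by (metis power2_eq_iff_nonneg less_trans zero_less_divide_1_iff zero_less_numeral order.strict_implies_order)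
      finally show ?thesis unfolding P_def using True by simp
    qed
  qed
  have ex: "\<exists>!x. P x"
  proof (rule ex1I[of _ x0])
    show "P x0" unfolding Pchar using x0a x0b cx0 by simp
  next
    fix y assume "P y"
    then have y: "pi/4 < y" "y < pi/3" "cos y = c0" unfolding Pchar by auto
    have y0: "0 \<le> y" "y \<le> pi" using y pi_gt_zero by linarith+
    have "cos y = cos x0" using y(3) cx0 by simp
    then show "y = x0" using cos_inj_pi[OF y0 x0r] by blast
  qed
  have Pe: "P (eta 4)" unfolding eta_def P_def[symmetric] using theI'[OF ex] .
  then show "pi / 4 < eta 4" "eta 4 < pi / 3" "cos (eta 4) = sqrt (sqrt 2) / 2"
    unfolding Pchar c0_def by auto
qed



lemma pow58: "j \<ge> 4 \<Longrightarrow> (5/8::real)^j * (real j + 3) \<le> 2"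
proof (induction j rule: dec_induct)
  case base then show ?case by (simp add: eval_nat_numeral)
next
  case (step j)
  have "(5/8::real)^(Suc j) * (real (Suc j) + 3) = (5/8)^j * ((5/8) * (real j + 4))" by (simp add: algebra_simps)
  also have "\<dots> \<le> (5/8)^j * (real j + 3)" by (intro mult_left_mono) auto
  finally show ?case using step.IH by linarith
qed

lemma u4:
  assumes "0 \<le> x" "x < eta 4"
  shows "4 * cos x ^ 2 > sqrt 2" "(4 * cos x ^ 2)^2 > 2"
proof -
  have e: "eta 4 < pi" using eta4(2) pi_gt_zero by linarith
  have "cos (eta 4) < cos x" using assms e by (intro cos_monotone_0_pi) auto
  then have c: "sqrt (sqrt 2) / 2 < cos x" using eta4(3) by simp
  have "(sqrt (sqrt 2) / 2)^2 < cos x ^ 2" using c by (intro power_strict_mono) auto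
  then show u: "4 * cos x ^ 2 > sqrt 2" by (simp add: power_divide)
  have "(sqrt 2)^2 < (4 * cos x ^ 2)^2" using u by (intro power_strict_mono) auto
  then show "(4 * cos x ^ 2)^2 > 2" by simp
qed

lemma gg4_pos:
  assumes "0 < x" "x < eta 4"
  shows "gg 4 x > 0"
proof -
  have x3: "x < pi/3" using assms eta4(2) by linarith
  have "cos (pi/3) < cos x" using assms x3 by (intro cos_monotone_0_pi) auto
  then have c: "cos x > 1/2" by (simp add: cos_60)
  have "(1/2)^2 < cos x ^ 2" using c by (intro power_strict_mono) auto
  then have u1: "4 * cos x ^ 2 - 1 > 0" by (simp add: power2_eq_square)
  have sx: "sin x > 0" using assms x3 by (intro sin_gt_zero) auto
  have u2: "(4 * cos x ^ 2)^2 - 2 > 0" using u4[of x] assms by simp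
  have "cos x > 0" using c by linarith
  then show ?thesis unfolding gg4_closed[OF \<open>cos x > 0\<close>] using sx u1 u2 c by simp
qed

lemma Q4:
  assumes "pi / 5 < x" "x < eta 4"
  shows "sin x > RR x ^ 2"
proof -
  have x0: "0 < x" using assms(1) pi_gt_zero by linarith
  have x3': "x < pi / 3" using assms(2) eta4(2) by linarith
  define u where "u = 4 * cos x ^ 2"
  have u1: "u > sqrt 2" unfolding u_def using u4(1)[of x] assms(2) x0 by simp
  have x3: "x < pi" using x3' pi_gt_zero by linarith
  have "cos x < cos (pi/6)"
  proof (rule cos_monotone_0_pi)
    show "0 \<le> pi / 6" by simp
    show "pi / 6 < x" using assms(1) pi_gt_zero by linarith
    show "x \<le> pi" using x3 by simp
  qed
  then have c: "cos x < sqrt 3 / 2" by (simp add: cos_30)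
  have cp: "cos x > 0"
  proof (rule cos_gt_zero)
    show "0 < x" by (rule x0)
    show "x < pi / 2" using x3' pi_gt_zero by linarith
  qed
  have "cos x ^ 2 < (sqrt 3 / 2)^2" using c cp by (intro power_strict_mono) auto
  then have u3: "u < 3" unfolding u_def by (simp add: power_divide)
  have up: "u > 0" unfolding u_def using cp by simp
  have s2: "sin x ^ 2 = 1 - u/4" unfolding u_def using sin_cos_squared_add[of x] by linarith
  have key: "u^2 * (1 - u/4) > 1"
  proof (cases "u \<le> 2")
    case True
    have "(sqrt 2)^2 < u^2" using u1 by (intro power_strict_mono) auto
    then have a: "u^2 > 2" by simp
    have "u^2 * (1/2) \<le> u^2 * (1 - u/4)" using True by (intro mult_left_mono) auto
    then show ?thesis using a by linarith
  next
    case False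
    have "2^2 < u^2" using False by (intro power_strict_mono) auto
    then have a: "u^2 > 4" by simp
    have "4 * (1 - u/4) \<le> u^2 * (1 - u/4)" using a u3 by (intro mult_right_mono) auto
    moreover have "4 * (1 - u/4) = 4 - u" by simp
    ultimately show ?thesis using u3 by linarith
  qed
  have r2: "RR x ^ 2 = 1 / u" unfolding u_def RR_def by (simp add: power_divide)
  have sx: "sin x > 0" using x0 x3 by (intro sin_gt_zero) auto
  have "(1/u)^2 < sin x ^ 2"
  proof -
    have "(1/u)^2 = 1 / u^2" by (simp add: power_divide)
    also have "\<dots> < (1 - u/4)"
    proof -
      have u2p: "u^2 > 0" using up by simp
      have "1 < (1 - u/4) * u^2" using key by (simp add: mult.commute)
      then show ?thesis using pos_divide_less_eq[OF u2p] by blast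
    qed
    finally show ?thesis unfolding s2 .
  qed
  then have "1/u < sin x" using sx power_less_imp_less_base[of "1/u" 2 "sin x"] by simp
  then show ?thesis unfolding r2 .
qed

lemma Q5:
  assumes "pi / 6 < x" "x \<le> pi / 4"
  shows "sin x > RR x ^ 3"
proof -
  have x0: "0 < x" using assms(1) pi_gt_zero by linarith
  have "sin (pi/6) < sin x" using assms by (intro sin_monotone_2pi) auto
  then have "sin x > 1/2" by (simp add: sin_30)
  then show ?thesis using RR_small(4)[OF x0 assms(2)] by linarith
qed

lemma Q6:
  assumes k: "k \<ge> 6" and x1: "pi / (real k + 1) < x" and x2: "x \<le> pi / 5"
  shows "sin x > RR x ^ (k - 2)"
proof -
  have kr: "real k \<ge> 6" using k by simp
  have "pi / (real k + 1) > 0" using kr by simp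
  then have x0: "0 < x" using x1 by linarith
  have c: "cos x \<ge> 4/5" using cos_pi5 x0 x2 by simp
  have r58: "RR x \<le> 5/8" using c unfolding RR_def by (simp add: field_simps)
  have r0: "RR x > 0" using c unfolding RR_def by simp
  have "RR x ^ (k - 2) \<le> (5/8)^(k-2)" using r0 r58 by (intro power_mono) auto
  also have "\<dots> \<le> 2 / (real k + 1)"
  proof -
    have "(5/8::real)^(k-2) * (real (k-2) + 3) \<le> 2" using k by (intro pow58) auto
    moreover have "real (k-2) + 3 = real k + 1" using k by simp
    ultimately show ?thesis using kr by (simp add: field_simps)
  qed
  also have "\<dots> < sin x"
  proof -
    have xa: "x \<le> (63/100)" using x2 pi_approx by simp
    have "x^2 \<le> (63/100)^2" using xa x0 by (intro power_mono) auto
    then have x2b: "x^2 \<le> (3969/10000)" by (simp add: power2_eq_square)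
    have "x * (1 - x^2/6) \<le> sin x" using sin_lb[of x] x0 by (simp add: power2_eq_square power3_eq_cube algebra_simps)
    moreover have "x * (9/10) \<le> x * (1 - x^2/6)" using x0 x2b by (intro mult_left_mono) auto
    moreover have "x * (real k + 1) > pi" using x1 kr by (simp add: field_simps)
    moreover have "pi > 3" using pi_approx by simp
    ultimately have "sin x * (real k + 1) \<ge> (x * (9/10)) * (real k + 1)" "x * (real k + 1) > 3"
      using kr by (auto intro: mult_right_mono)
    moreover have "(x * (9/10)) * (real k + 1) = (9/10) * (x * (real k + 1))" by simp
    ultimately have "sin x * (real k + 1) > 2" by linarith
    then show ?thesis using kr by (simp add: field_simps)
  qed
  finally show ?thesis .
qed

theorem lemma6p2:
  fixes k :: nat and \<eta> :: real
  assumes "k \<ge> 4" and "eta (k + 1) \<le> \<eta>" and "\<eta> < eta k"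
  shows "angle3 (zz \<eta> (k - 1)) (zz \<eta> k) (ww \<eta> 1) \<in> {0<..<pi}
       \<and> angle3 (zz \<eta> k) (ww \<eta> 1) (ww \<eta> 2) \<in> {0<..<pi}
       \<and> angle3 (ww \<eta> (k - 1)) (ww \<eta> k) (bb0 \<eta>) \<in> {0<..<pi}
       \<and> angle3 (ww \<eta> k) (bb0 \<eta>) (zz \<eta> 0) \<in> {0<..<pi}"
proof -
  define n where "n = k - 4"
  have kn: "k = n + 4" using assms(1) unfolding n_def by simp
  have k5: "k + 1 \<ge> 5" using assms(1) by simp
  have kr: "real k \<ge> 4" using assms(1) by simp
  have e1: "pi / (real k + 1) < eta (k + 1)" using eta_big(1)[OF k5] by (simp add: add.commute)
  have e2: "eta (k + 1) < pi / real k" using eta_big(2)[OF k5] by simp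
  have x1: "pi / (real k + 1) < \<eta>" using e1 assms(2) by linarith
  have ek3: "eta k < pi / 3"
  proof (cases "k = 4")
    case True then show ?thesis using eta4(2) by simp
  next
    case False
    then have k5': "k \<ge> 5" using assms(1) by simp
    have "pi / (real k - 1) \<le> pi / 4" using big_facts(2)[OF k5'] .
    moreover have "pi / 4 < pi / 3" by simp
    ultimately show ?thesis using eta_big(2)[OF k5'] by linarith
  qed
  have "pi / (real k + 1) > 0" using kr by simp
  then have x0: "0 < \<eta>" using x1 by linarith
  have x3: "\<eta> < pi / 3" using assms(3) ek3 by linarith
  have "cos (pi/3) < cos \<eta>" using x0 x3 by (intro cos_monotone_0_pi) auto
  then have ch: "cos \<eta> > 1/2" by (simp add: cos_60)
  then have cpos: "cos \<eta> > 0" by linarith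
  have r1: "RR \<eta> < 1" using ch unfolding RR_def by (simp add: field_simps)
  have r0: "RR \<eta> > 0" using cpos unfolding RR_def by simp
  have P: "Phi k \<eta> > 0"
  proof -
    have "gg k \<eta> > 0"
    proof (cases "\<eta> \<le> pi / real k")
      case True then show ?thesis using posP[OF assms(1)] x1 by simp
    next
      case False
      show ?thesis
      proof (cases "k = 4")
        case True then show ?thesis using gg4_pos x0 assms(3) by simp
      next
        case k4: False
        then have k5': "k \<ge> 5" using assms(1) by simp
        show ?thesis using eta_big(4)[OF k5', of \<eta>] False assms(3) by simp
      qed
    qed
    then show ?thesis using Phi_gg[OF cpos] by simp
  qed
  have S: "sin \<eta> > RR \<eta> ^ (k - 2)"
  proof -
    consider "k = 4" | "k = 5" | "k \<ge> 6" using assms(1) by linarith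
    then show ?thesis
    proof cases
      case 1 then show ?thesis using Q4[of \<eta>] x1 assms(3) by simp
    next
      case 2
      have "eta 5 < pi / 4" using eta_big(2)[of 5] by simp
      then show ?thesis using Q5[of \<eta>] x1 assms(3) 2 by simp
    next
      case 3
      have "eta k < pi / (real k - 1)" using eta_big(2)[of k] 3 by simp
      moreover have "pi / (real k - 1) \<le> pi / 5" using 3 by (intro divide_left_mono) auto
      ultimately have "\<eta> \<le> pi / 5" using assms(3) by linarith
      then show ?thesis using Q6[OF 3 x1] by simp
    qed
  qed
  have Q: "sin \<eta> + RR \<eta> ^ (n+2) * sin (real (n+5) * \<eta>) > 0"
  proof -
    have "RR \<eta> ^ (n+2) * (-1) \<le> RR \<eta> ^ (n+2) * sin (real (n+5) * \<eta>)"
      using r0 by (intro mult_left_mono) auto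
    moreover have "k - 2 = n + 2" using kn by simp
    ultimately show ?thesis using S by simp
  qed
  have P': "Phi (n+4) \<eta> > 0" using P kn by simp
  note A = angles[OF cpos r1]
  have k1: "k - 1 = n + 3" using kn by simp
  show ?thesis unfolding k1 unfolding kn using A(1)[OF P'] A(2)[OF P'] A(3)[OF Q] A(4)[OF Q] by blast
qed


end
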